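(* Let $\sigma:\mathbb{R}\to\mathbb{R}$ be a continuous discriminatory function. Let $n\ge1$ and let $\mathbf{A},\mathbf{B}\in\mathbb{R}^{n\times n}$ be non-singular diagonalizable matrices such that (i) $\mathbf{A}^q=a\mathbf{I}$ for some positive integer $q\le n$ and some scalar $a\neq0$; (ii) $\mathbf{I}-a\mathbf{B}^q$ is nonsingular; (iii) the eigenvalues of $\mathbf{B}$ have pairwise distinct absolute values. Then for every continuous function $f:[0,1]^n\to\mathbb{R}$ and every $\epsilon>0$ there exist a positive integer $k$, a matrix $\mathbf{W}=[\mathbf{w}_1|\cdots|\mathbf{w}_{kn}]=[\mathbf{W}_1|\mathbf{W}_2|\cdots|\mathbf{W}_k]\in\mathbb{R}^{n\times kn}$ whose $n\times n$ blocks $\mathbf{W}_i$ each satisfy $\mathbf{W}_i-\mathbf{A}\mathbf{W}_i\mathbf{B}=\mathbf{g}_i\mathbf{h}_i^T$ for some $\mathbf{g}_i,\mathbf{h}_i\in\mathbb{R}^n$ (i.e. have Stein displacement rank at most $1$), and real numbers $\alpha_1,\dots,\alpha_{kn},\theta_1,\dots,\theta_{kn}$ such that the function $$G(\mathbf{x})=\sum_{j=1}^{kn}\alpha_j\,\sigma(\mathbf{w}_j^T\mathbf{x}+\theta_j)$$ satisfies $\max_{\mathbf{x}\in[0,1]^n}|G(\mathbf{x})-f(\mathbf{x})|<\epsilon$.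
   Context: A function $\sigma:\mathbb{R}\to\mathbb{R}$ is called discriminatory if the zero measure is the only finite signed regular Borel measure $\mu$ on $[0,1]^n$ such that $\int_{[0,1]^n}\sigma(\mathbf{w}^T\mathbf{x}+\theta)\,d\mu(\mathbf{x})=0$ for all $\mathbf{w}\in\mathbb{R}^n$ and $\theta\in\mathbb{R}$. $\mathbf{w}_j$ denotes the $j$-th column of $\mathbf{W}$. *)

theory Defs
  imports "HOL-Analysis.Analysis"
begin

definition unit_cube :: "(real^'n) set" where
  "unit_cube = {x. \<forall>i. 0 \<le> x$i \<and> x$i \<le> 1}"

text \<open>A finite signed (regular) Borel measure on the cube is represented by its
  Jordan decomposition mu = M1 - M2 into two finite Borel measures on the cube
  (on the compact metric space [0,1]^n every finite Borel measure is regular).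
  mu is the zero measure iff M1 and M2 agree on every Borel set.\<close>
definition discriminatory :: "(real \<Rightarrow> real) \<Rightarrow> 'n::finite itself \<Rightarrow> bool" where
  "discriminatory \<sigma> (_::'n itself) \<longleftrightarrow>
     (\<forall>M1 M2 :: (real^'n) measure.
        finite_measure M1 \<and> finite_measure M2 \<and>
        sets M1 = sets (restrict_space borel (unit_cube :: (real^'n) set)) \<and>
        sets M2 = sets (restrict_space borel (unit_cube :: (real^'n) set)) \<and>
        (\<forall>w \<theta>. (\<integral>x. \<sigma> (w \<bullet> x + \<theta>) \<partial>M1) = (\<integral>x. \<sigma> (w \<bullet> x + \<theta>) \<partial>M2))
        \<longrightarrow> (\<forall>S \<in> sets M1. measure M1 S = measure M2 S))"

primrec mat_pow :: "'a::semiring_1^'n^'n \<Rightarrow> nat \<Rightarrow> 'a^'n^'n" where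
  "mat_pow A 0 = mat 1"
| "mat_pow A (Suc k) = A ** mat_pow A k"

definition cmat :: "real^'n^'m \<Rightarrow> complex^'n^'m" where
  "cmat A = (\<chi> i j. complex_of_real (A$i$j))"

definition diagonalizable :: "real^'n^'n \<Rightarrow> bool" where
  "diagonalizable A \<longleftrightarrow> (\<exists>(P::complex^'n^'n) (D::complex^'n^'n).
      invertible P \<and> (\<forall>i j. i \<noteq> j \<longrightarrow> D$i$j = 0) \<and> cmat A = P ** D ** matrix_inv P)"

definition eigenvalues :: "real^'n^'n \<Rightarrow> complex set" where
  "eigenvalues A = {e. \<exists>v::complex^'n. v \<noteq> 0 \<and> cmat A *v v = e *s v}"

text \<open>The n eigenvalues (counted with multiplicity) have pairwise distinct absolute
  values: there are n distinct eigenvalues and cmod is injective on them.\<close>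
definition distinct_abs_eigenvalues :: "real^'n^'n \<Rightarrow> bool" where
  "distinct_abs_eigenvalues A \<longleftrightarrow>
     card (eigenvalues A) = CARD('n) \<and> inj_on cmod (eigenvalues A)"

definition outer :: "real^'n \<Rightarrow> real^'n \<Rightarrow> real^'n^'n" where
  "outer g h = (\<chi> r c. g$r * h$c)"

end

theory Submission
  imports Defs
begin


definition net :: "(real \<Rightarrow> real) \<Rightarrow> (real \<times> real \<times> real) list \<Rightarrow> real \<Rightarrow> real" where
  "net \<sigma> L t = sum_list (map (\<lambda>(\<beta>,w,\<theta>). \<beta> * \<sigma> (w*t+\<theta>)) L)"

definition approx_on :: "(real \<Rightarrow> real) \<Rightarrow> real \<Rightarrow> real \<Rightarrow> (real \<Rightarrow> real) \<Rightarrow> bool" where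
  "approx_on \<sigma> a b F \<longleftrightarrow> (\<forall>\<epsilon>>0. \<exists>L. \<forall>t\<in>{a..b}. \<bar>net \<sigma> L t - F t\<bar> < \<epsilon>)"

lemma abs_tri_lt: "\<bar>x - y\<bar> < e1 \<Longrightarrow> \<bar>y - z\<bar> < e2 \<Longrightarrow> \<bar>x - z\<bar> < (e1 + e2::real)"
  by arith

lemma frac_lt: "0 < (\<epsilon>::real) \<Longrightarrow> 0 \<le> X \<Longrightarrow> X * (\<epsilon> / (X + 1)) < \<epsilon>"
  by (simp add: field_simps)

lemma net_append[simp]: "net \<sigma> (L1 @ L2) t = net \<sigma> L1 t + net \<sigma> L2 t"
  by (simp add: net_def)

lemma net_Nil[simp]: "net \<sigma> [] t = 0"
  by (simp add: net_def)

lemma net_scale: "net \<sigma> (map (\<lambda>(\<beta>,w,\<theta>). (c*\<beta>,w,\<theta>)) L) t = c * net \<sigma> L t"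
  by (induction L) (auto simp: net_def algebra_simps)

lemma approx_on_add:
  assumes "approx_on \<sigma> a b F" "approx_on \<sigma> a b G"
  shows "approx_on \<sigma> a b (\<lambda>t. F t + G t)"
  unfolding approx_on_def
proof (intro allI impI)
  fix \<epsilon> :: real assume e: "\<epsilon> > 0"
  obtain L1 where L1: "\<forall>t\<in>{a..b}. \<bar>net \<sigma> L1 t - F t\<bar> < \<epsilon>/2"
    using assms(1) e unfolding approx_on_def by (meson half_gt_zero)
  obtain L2 where L2: "\<forall>t\<in>{a..b}. \<bar>net \<sigma> L2 t - G t\<bar> < \<epsilon>/2"
    using assms(2) e unfolding approx_on_def by (meson half_gt_zero)
  show "\<exists>L. \<forall>t\<in>{a..b}. \<bar>net \<sigma> L t - (F t + G t)\<bar> < \<epsilon>"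
  proof (intro exI ballI)
    fix t assume t: "t \<in> {a..b}"
    show "\<bar>net \<sigma> (L1@L2) t - (F t + G t)\<bar> < \<epsilon>"
      using L1[rule_format, OF t] L2[rule_format, OF t] 
        abs_triangle_ineq[of "net \<sigma> L1 t - F t" "net \<sigma> L2 t - G t"] by (simp add: algebra_simps)
  qed
qed

lemma approx_on_cmult:
  assumes "approx_on \<sigma> a b F"
  shows "approx_on \<sigma> a b (\<lambda>t. c * F t)"
  unfolding approx_on_def
proof (intro allI impI)
  fix \<epsilon> :: real assume e: "\<epsilon> > 0"
  obtain L1 where L1: "\<forall>t\<in>{a..b}. \<bar>net \<sigma> L1 t - F t\<bar> < \<epsilon>/(\<bar>c\<bar>+1)"
    using assms(1) e unfolding approx_on_def by (meson divide_pos_pos abs_ge_zero add_nonneg_pos zero_less_one)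
  show "\<exists>L. \<forall>t\<in>{a..b}. \<bar>net \<sigma> L t - c * F t\<bar> < \<epsilon>"
  proof (intro exI ballI)
    fix t assume t: "t \<in> {a..b}"
    have "\<bar>net \<sigma> (map (\<lambda>(\<beta>,w,\<theta>). (c*\<beta>,w,\<theta>)) L1) t - c * F t\<bar> = \<bar>c\<bar> * \<bar>net \<sigma> L1 t - F t\<bar>"
      by (simp only: net_scale flip: right_diff_distrib abs_mult)
    also have "\<dots> \<le> \<bar>c\<bar> * (\<epsilon>/(\<bar>c\<bar>+1))"
      using L1[rule_format, OF t] by (intro mult_left_mono) auto
    also have "\<dots> < \<epsilon>"
      using e by (simp add: field_simps)
    finally show "\<bar>net \<sigma> (map (\<lambda>(\<beta>,w,\<theta>). (c*\<beta>,w,\<theta>)) L1) t - c * F t\<bar> < \<epsilon>" .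
  qed
qed

lemma approx_on_zero: "approx_on \<sigma> a b (\<lambda>t. 0)"
  unfolding approx_on_def by (intro allI impI exI[of _ "[]"]) auto

lemma approx_on_diff:
  assumes "approx_on \<sigma> a b F" "approx_on \<sigma> a b G"
  shows "approx_on \<sigma> a b (\<lambda>t. F t - G t)"
  using approx_on_add[OF assms(1) approx_on_cmult[OF assms(2), of "-1"]] by simp

lemma approx_on_sum:
  assumes "finite I" "\<And>i. i \<in> I \<Longrightarrow> approx_on \<sigma> a b (F i)"
  shows "approx_on \<sigma> a b (\<lambda>t. \<Sum>i\<in>I. F i t)"
  using assms by (induction I rule: finite_induct) (auto intro: approx_on_zero approx_on_add)

lemma approx_on_limit:
  assumes "\<And>\<epsilon>. \<epsilon> > 0 \<Longrightarrow> \<exists>G. approx_on \<sigma> a b G \<and> (\<forall>t\<in>{a..b}. \<bar>G t - F t\<bar> < \<epsilon>)"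
  shows "approx_on \<sigma> a b F"
  unfolding approx_on_def
proof (intro allI impI)
  fix \<epsilon> :: real assume e: "\<epsilon> > 0"
  obtain G where G: "approx_on \<sigma> a b G" "\<forall>t\<in>{a..b}. \<bar>G t - F t\<bar> < \<epsilon>/2"
    using assms e by (meson half_gt_zero)
  obtain L where L: "\<forall>t\<in>{a..b}. \<bar>net \<sigma> L t - G t\<bar> < \<epsilon>/2"
    using G(1) e unfolding approx_on_def by (meson half_gt_zero)
  show "\<exists>L. \<forall>t\<in>{a..b}. \<bar>net \<sigma> L t - F t\<bar> < \<epsilon>"
    using L G(2) abs_tri_lt[of _ _ "\<epsilon>/2" _ "\<epsilon>/2"] by (intro exI[of _ L]) fastforce
qed

definition appr :: "(real \<Rightarrow> real) \<Rightarrow> nat \<Rightarrow> (real \<Rightarrow> real) \<Rightarrow> bool" where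
  "appr \<sigma> j g \<longleftrightarrow> (\<forall>w \<theta> a b. approx_on \<sigma> a b (\<lambda>t. t^j * g (w*t+\<theta>)))"

lemma appr_base: "appr \<sigma> 0 (\<lambda>x. \<sigma> (r*x+c))"
  unfolding appr_def approx_on_def
proof (intro allI impI)
  fix w \<theta> a b \<epsilon> :: real assume "\<epsilon> > 0"
  then show "\<exists>L. \<forall>t\<in>{a..b}. \<bar>net \<sigma> L t - t ^ 0 * \<sigma> (r * (w * t + \<theta>) + c)\<bar> < \<epsilon>"
    by (intro exI[of _ "[(1, r*w, r*\<theta>+c)]"]) (simp add: net_def algebra_simps)
qed

lemma appr_shift:
  assumes "appr \<sigma> j f"
  shows "appr \<sigma> j (\<lambda>x. f (x + c))"
  unfolding appr_def
proof (intro allI)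
  fix w \<theta> a b
  show "approx_on \<sigma> a b (\<lambda>t. t ^ j * f (w * t + \<theta> + c))"
    using assms[unfolded appr_def, rule_format, of a b w "\<theta>+c"]
    by (simp add: add.assoc)
qed

lemma appr_deriv:
  assumes der: "\<And>x. (g has_real_derivative g' x) (at x)"
    and cont: "continuous_on UNIV g'" and ap: "appr \<sigma> j g"
  shows "appr \<sigma> (Suc j) g'"
  unfolding appr_def
proof (intro allI)
  fix w \<theta> a b :: real
  define T where "T = max \<bar>a\<bar> \<bar>b\<bar>"
  have T0: "T \<ge> 0" unfolding T_def by auto
  define R where "R = (\<bar>w\<bar>+1)*T + \<bar>\<theta>\<bar>"
  have uc: "uniformly_continuous_on {-R..R} g'"
    by (rule compact_uniformly_continuous) (use cont continuous_on_subset in auto)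
  show "approx_on \<sigma> a b (\<lambda>t. t^Suc j * g' (w*t+\<theta>))"
  proof (rule approx_on_limit)
    fix \<epsilon>::real assume e: "\<epsilon> > 0"
    define \<epsilon>' where "\<epsilon>' = \<epsilon> / (T^(Suc j) + 1)"
    have e': "\<epsilon>' > 0" using e T0 unfolding \<epsilon>'_def by (simp add: add_nonneg_pos)
    obtain d where d: "d > 0" "\<forall>x\<in>{-R..R}. \<forall>x'\<in>{-R..R}. dist x' x < d \<longrightarrow> dist (g' x') (g' x) < \<epsilon>'"
      using uc e' unfolding uniformly_continuous_on_def by metis
    define h where "h = min 1 (d/(T+1))"
    have h: "h > 0" "h \<le> 1" "h*T < d"
    proof -
      show "h > 0" "h \<le> 1" using d T0 by (auto simp: h_def)
      have "h*T \<le> (d/(T+1))*T" using T0 by (intro mult_right_mono) (auto simp: h_def)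
      also have "\<dots> < d" using d T0 by (simp add: field_simps)
      finally show "h*T < d" .
    qed
    define G where "G = (\<lambda>t. (1/h) * (t^j * g((w+h)*t+\<theta>)) - (1/h)*(t^j * g(w*t+\<theta>)))"
    have "approx_on \<sigma> a b G"
      unfolding G_def using ap unfolding appr_def
      by (intro approx_on_diff approx_on_cmult) auto
    moreover have "\<forall>t\<in>{a..b}. \<bar>G t - t^Suc j * g' (w*t+\<theta>)\<bar> < \<epsilon>"
    proof
      fix t assume t: "t \<in> {a..b}"
      have tT: "\<bar>t\<bar> \<le> T" using t unfolding T_def by auto
      define y where "y = w*t+\<theta>"
      have "\<bar>y\<bar> \<le> \<bar>w\<bar>*\<bar>t\<bar> + \<bar>\<theta>\<bar>" unfolding y_def by (metis abs_mult abs_triangle_ineq)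
      also have "\<dots> \<le> \<bar>w\<bar>*T + \<bar>\<theta>\<bar>" using tT by (simp add: mult_left_mono)
      finally have y: "\<bar>y\<bar> \<le> \<bar>w\<bar>*T + \<bar>\<theta>\<bar>" .
      have dd: "((\<lambda>s. g(y+s*t)) has_real_derivative (g'(y+s*t) * t)) (at s)" for s
        by (rule DERIV_chain2[OF der]) (auto intro!: derivative_eq_intros)
      obtain z where z: "0 < z" "z < h" "g(y+h*t) - g(y+0*t) = (h - 0) * (g'(y+z*t) * t)"
        using MVT2[of 0 h "\<lambda>s. g(y+s*t)" "\<lambda>s. g'(y+s*t) * t"] dd h(1) by blast
      have Gt: "G t = t^Suc j * g'(y+z*t)"
      proof -
        have "(w+h)*t+\<theta> = y+h*t" unfolding y_def by (simp add: algebra_simps)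
        then have "G t = t^j * (g(y+h*t) - g y) / h" unfolding G_def y_def using h(1) by (simp add: field_simps)
        also have "\<dots> = t^Suc j * g'(y+z*t)" using z(3) h(1) by simp
        finally show ?thesis .
      qed
      have zt: "\<bar>z*t\<bar> \<le> h*T" using z h tT by (simp add: abs_mult mult_mono)
      have in1: "y \<in> {-R..R}" "y+z*t \<in> {-R..R}"
      proof -
        have "\<bar>w\<bar>*T + \<bar>\<theta>\<bar> + T \<le> R" unfolding R_def by (simp add: algebra_simps)
        moreover have "h*T \<le> T" using h(1) h(2) T0 by (intro mult_left_le_one_le) auto
        ultimately show "y \<in> {-R..R}" "y+z*t \<in> {-R..R}" using y zt T0 abs_triangle_ineq[of y "z*t"]
           abs_le_iff[of y] abs_le_iff[of "y+z*t"] unfolding atLeastAtMost_iff by linarith+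
      qed
      have dist: "\<bar>g'(y+z*t) - g' y\<bar> < \<epsilon>'"
        using d(2) in1 zt h(3) by (auto simp: dist_real_def)
      have "\<bar>G t - t^Suc j * g' (w*t+\<theta>)\<bar> = \<bar>t\<bar>^Suc j * \<bar>g'(y+z*t) - g' y\<bar>"
        unfolding Gt y_def by (simp add: abs_mult power_abs right_diff_distrib[symmetric])
      also have "\<dots> \<le> T^Suc j * \<epsilon>'"
        using dist tT by (intro mult_mono power_mono) auto
      also have "\<dots> < \<epsilon>"
        using e T0 unfolding \<epsilon>'_def by (intro frac_lt) auto
      finally show "\<bar>G t - t^Suc j * g' (w*t+\<theta>)\<bar> < \<epsilon>" .
    qed
    ultimately show "\<exists>G. approx_on \<sigma> a b G \<and> (\<forall>t\<in>{a..b}. \<bar>G t - t ^ Suc j * g' (w * t + \<theta>)\<bar> < \<epsilon>)"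
      by blast
  qed
qed

lemma antideriv_exists:
  fixes f :: "real \<Rightarrow> real"
  assumes cont: "continuous_on UNIV f"
  shows "\<exists>\<Phi>. \<forall>x. (\<Phi> has_real_derivative f x) (at x)"
proof -
  have "\<forall>x. ((\<lambda>u. LBINT y=ereal 0..u. f y) has_real_derivative f x) (at x)"
  proof
  fix x :: real
  define a where "a = -\<bar>x\<bar>-1"
  define b where "b = \<bar>x\<bar>+1"
  have "((\<lambda>u. LBINT y=ereal 0..u. f y) has_vector_derivative f x) (at x within {a..b})"
    by (rule interval_integral_FTC2) (use cont continuous_on_subset in \<open>auto simp: a_def b_def\<close>)
  then have "((\<lambda>u. LBINT y=ereal 0..u. f y) has_vector_derivative f x) (at x within {a<..<b})"
    by (rule has_vector_derivative_within_subset) auto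
  moreover have "at x within {a<..<b} = at x"
    by (rule at_within_open) (auto simp: a_def b_def)
  ultimately show "((\<lambda>u. LBINT y=ereal 0..u. f y) has_real_derivative f x) (at x)"
    by (simp add: has_real_derivative_iff_has_vector_derivative)
  qed
  then show ?thesis by blast
qed

lemma appr_avg:
  assumes cont: "continuous_on UNIV f" and der: "\<And>x. (\<Phi> has_real_derivative f x) (at x)"
    and ap: "appr \<sigma> j f"
  shows "appr \<sigma> j (\<lambda>x. \<Phi> (x+1) - \<Phi> x)"
  unfolding appr_def
proof (intro allI)
  fix w \<theta> a b :: real
  define T where "T = max \<bar>a\<bar> \<bar>b\<bar>"
  have T0: "T \<ge> 0" unfolding T_def by auto
  define R where "R = \<bar>w\<bar>*T + \<bar>\<theta>\<bar> + 1"
  have uc: "uniformly_continuous_on {-R..R} f"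
    by (rule compact_uniformly_continuous) (use cont continuous_on_subset in auto)
  show "approx_on \<sigma> a b (\<lambda>t. t^j * (\<Phi> (w*t+\<theta>+1) - \<Phi> (w*t+\<theta>)))"
  proof (rule approx_on_limit)
    fix \<epsilon>::real assume e: "\<epsilon> > 0"
    define \<epsilon>' where "\<epsilon>' = \<epsilon> / (T^j + 1)"
    have e': "\<epsilon>' > 0" using e T0 unfolding \<epsilon>'_def by (simp add: add_nonneg_pos)
    obtain d where d: "d > 0" "\<forall>x\<in>{-R..R}. \<forall>x'\<in>{-R..R}. dist x' x < d \<longrightarrow> dist (f x') (f x) < \<epsilon>'"
      using uc e' unfolding uniformly_continuous_on_def by metis
    obtain M :: nat where M0: "1/d < real M"
      using reals_Archimedean2 by blast
    have M: "M > 0" "1 / real M < d"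
    proof -
      have "0 < 1/d" using d(1) by simp
      then show "M > 0" using M0 by (metis of_nat_0_less_iff order.strict_trans)
      then show "1 / real M < d" using M0 d(1) by (simp add: field_simps)
    qed
    define G where "G = (\<lambda>t. \<Sum>i<M. (1/M) * (t^j * f (w*t + (\<theta> + real i/M))))"
    have "approx_on \<sigma> a b G"
      unfolding G_def using ap unfolding appr_def
      by (intro approx_on_sum approx_on_cmult) (auto simp: add.assoc)
    moreover have "\<forall>t\<in>{a..b}. \<bar>G t - t^j * (\<Phi> (w*t+\<theta>+1) - \<Phi> (w*t+\<theta>))\<bar> < \<epsilon>"
    proof
      fix t assume t: "t \<in> {a..b}"
      have tT: "\<bar>t\<bar> \<le> T" using t unfolding T_def by auto
      define y where "y = w*t+\<theta>"
      have "\<bar>y\<bar> \<le> \<bar>w\<bar>*\<bar>t\<bar> + \<bar>\<theta>\<bar>" unfolding y_def by (metis abs_mult abs_triangle_ineq)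
      also have "\<dots> \<le> \<bar>w\<bar>*T + \<bar>\<theta>\<bar>" using tT by (simp add: mult_left_mono)
      finally have y: "\<bar>y\<bar> \<le> \<bar>w\<bar>*T + \<bar>\<theta>\<bar>" .
      define P where "P = (\<lambda>i z. y + real i/M < z \<and> z < y + real (Suc i)/M \<and>
          \<Phi> (y + real (Suc i)/M) - \<Phi> (y + real i/M) = (1/M) * f z)"
      have exz: "\<exists>z. P i z" if "i < M" for i
      proof -
        have lt: "y + real i/M < y + real (Suc i)/M" using M by (simp add: divide_strict_right_mono)
        obtain z where "y + real i/M < z" "z < y + real (Suc i)/M"
          "\<Phi> (y + real (Suc i)/M) - \<Phi> (y + real i/M) = (y + real (Suc i)/M - (y + real i/M)) * f z"
          using MVT2[OF lt, of \<Phi> f] der by blast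
        moreover have "y + real (Suc i)/M - (y + real i/M) = 1/M" using M by (simp add: field_simps)
        ultimately show ?thesis unfolding P_def by auto
      qed
      define z where "z = (\<lambda>i. SOME z. P i z)"
      have z: "y + real i/M < z i \<and> z i < y + real (Suc i)/M \<and>
          \<Phi> (y + real (Suc i)/M) - \<Phi> (y + real i/M) = (1/M) * f (z i)" if "i < M" for i
        using someI_ex[OF exz[OF that]] unfolding z_def P_def .
      have tele: "\<Phi> (y+1) - \<Phi> y = (\<Sum>i<M. (1/M) * f (z i))"
      proof -
        have "(\<Sum>i<M. \<Phi> (y + real (Suc i)/M) - \<Phi> (y + real i/M)) = \<Phi> (y + real M/M) - \<Phi> (y + real 0/M)"
          by (rule sum_lessThan_telescope[where f="\<lambda>i. \<Phi> (y + real i/M)"])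
        also have "\<dots> = \<Phi> (y+1) - \<Phi> y" using M by simp
        finally show ?thesis using z by simp
      qed
      have close: "\<bar>f (z i) - f (y + real i/M)\<bar> < \<epsilon>'" if i: "i < M" for i
      proof -
        have iM: "real i / M \<le> 1" "0 \<le> real i / M" "real (Suc i)/M \<le> 1" using i M by (auto simp: field_simps)
        have "\<bar>w\<bar>*T + \<bar>\<theta>\<bar> + 1 \<le> R" unfolding R_def by simp
        then have in1: "y + real i/M \<in> {-R..R}" "z i \<in> {-R..R}"
          using z[OF i] y iM abs_le_iff[of y] unfolding atLeastAtMost_iff by linarith+
        have "dist (z i) (y + real i/M) < d"
        proof -
          have "real (Suc i)/M = 1/M + real i/M" using M by (simp add: field_simps)
          then have "z i - (y + real i/M) < 1/M" using z[OF i] by linarith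
          then show ?thesis using z[OF i] M by (simp add: dist_real_def)
        qed
        then show ?thesis using d(2) in1 by (auto simp: dist_real_def)
      qed
      have "\<bar>(\<Sum>i<M. (1/M) * f (y + real i/M)) - (\<Phi> (y+1) - \<Phi> y)\<bar> = \<bar>\<Sum>i<M. (1/M) * (f (y + real i/M) - f (z i))\<bar>"
        unfolding tele by (simp add: sum_subtractf right_diff_distrib)
      also have "\<dots> \<le> (\<Sum>i<M. \<bar>(1/M) * (f (y + real i/M) - f (z i))\<bar>)"
        by (rule sum_abs)
      also have "\<dots> \<le> (\<Sum>i<M. (1/M) * \<epsilon>')"
      proof (rule sum_mono)
        fix i assume "i \<in> {..<M}"
        then have "\<bar>f (y + real i/M) - f (z i)\<bar> \<le> \<epsilon>'" using close[of i] by (simp add: abs_minus_commute)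
        then show "\<bar>(1/M) * (f (y + real i/M) - f (z i))\<bar> \<le> (1/M) * \<epsilon>'"
          by (simp add: abs_mult divide_right_mono)
      qed
      also have "\<dots> = \<epsilon>'" using M by simp
      finally have main: "\<bar>(\<Sum>i<M. (1/M) * f (y + real i/M)) - (\<Phi> (y+1) - \<Phi> y)\<bar> \<le> \<epsilon>'" .
      have "G t - t^j * (\<Phi> (w*t+\<theta>+1) - \<Phi> (w*t+\<theta>)) =
          t^j * ((\<Sum>i<M. (1/M) * f (y + real i/M)) - (\<Phi> (y+1) - \<Phi> y))"
        unfolding G_def y_def by (simp add: sum_distrib_left algebra_simps)
      then have "\<bar>G t - t^j * (\<Phi> (w*t+\<theta>+1) - \<Phi> (w*t+\<theta>))\<bar> =
          \<bar>t\<bar>^j * \<bar>(\<Sum>i<M. (1/M) * f (y + real i/M)) - (\<Phi> (y+1) - \<Phi> y)\<bar>"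
        by (simp add: abs_mult power_abs)
      also have "\<dots> \<le> T^j * \<epsilon>'"
        using main tT by (intro mult_mono power_mono) auto
      also have "\<dots> < \<epsilon>"
        using e T0 unfolding \<epsilon>'_def by (intro frac_lt) auto
      finally show "\<bar>G t - t^j * (\<Phi> (w*t+\<theta>+1) - \<Phi> (w*t+\<theta>))\<bar> < \<epsilon>" .
    qed
    ultimately show "\<exists>G. approx_on \<sigma> a b G \<and> (\<forall>t\<in>{a..b}. \<bar>G t - t^j * (\<Phi> (w*t+\<theta>+1) - \<Phi> (w*t+\<theta>))\<bar> < \<epsilon>)"
      by blast
  qed
qed

lemma appr_step:
  assumes cont: "continuous_on UNIV f" and ap: "appr \<sigma> j f"
  shows "appr \<sigma> (Suc j) (\<lambda>x. f (x+1) - f x)"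
proof -
  obtain \<Phi> where der: "\<And>x. (\<Phi> has_real_derivative f x) (at x)"
    using antideriv_exists[OF cont] by blast
  have a1: "appr \<sigma> j (\<lambda>x. \<Phi> (x+1) - \<Phi> x)"
    by (rule appr_avg[OF cont der ap])
  have d1: "((\<lambda>x. \<Phi> (x+1) - \<Phi> x) has_real_derivative (f (x+1) - f x)) (at x)" for x
  proof -
    have "((\<lambda>x. \<Phi> (x+1)) has_real_derivative (f (x+1) * 1)) (at x)"
      by (rule DERIV_chain2[OF der]) (auto intro!: derivative_eq_intros)
    then show ?thesis using der[of x] by (auto intro!: derivative_eq_intros)
  qed
  have c1: "continuous_on UNIV (\<lambda>x. f (x+1) - f x)"
    by (intro continuous_intros continuous_on_compose2[OF cont]) auto
  show ?thesis by (rule appr_deriv[OF d1 c1 a1])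
qed




primrec fd :: "(real \<Rightarrow> real) \<Rightarrow> nat \<Rightarrow> real \<Rightarrow> real" where
  "fd f 0 = f"
| "fd f (Suc k) = (\<lambda>x. fd f k (x+1) - fd f k x)"

primrec cf :: "nat \<Rightarrow> nat \<Rightarrow> real" where
  "cf 0 j = (if j = 0 then 1 else 0)"
| "cf (Suc k) j = (if j = 0 then 0 else cf k (j-1)) - cf k j"

lemma cf_zero: "k < j \<Longrightarrow> cf k j = 0"
  by (induction k arbitrary: j) auto

lemma cf_top: "cf k k = 1"
  by (induction k) (auto simp: cf_zero)

lemma fd_sum: "fd f k x = (\<Sum>j\<le>k. cf k j * f (x + real j))"
proof (induction k arbitrary: x)
  case 0
  then show ?case by simp
next
  case (Suc k)
  have "(\<Sum>j\<le>Suc k. cf (Suc k) j * f (x + real j)) =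
      (\<Sum>j\<le>Suc k. (if j = 0 then 0 else cf k (j-1)) * f (x + real j)) - (\<Sum>j\<le>Suc k. cf k j * f (x + real j))"
    by (simp add: left_diff_distrib sum_subtractf)
  also have "(\<Sum>j\<le>Suc k. (if j = 0 then 0 else cf k (j-1)) * f (x + real j)) = (\<Sum>j\<le>k. cf k j * f (x + 1 + real j))"
    by (subst sum.atMost_Suc_shift) (simp add: add_ac)
  also have "(\<Sum>j\<le>Suc k. cf k j * f (x + real j)) = (\<Sum>j\<le>k. cf k j * f (x + real j))"
    by (simp add: cf_zero)
  finally show ?case using Suc.IH by simp
qed

lemma fd_cont: "continuous_on UNIV f \<Longrightarrow> continuous_on UNIV (fd f k)"
proof (induction k)
  case 0
  then show ?case by simp
next
  case (Suc k)
  then have c: "continuous_on UNIV (fd f k)" by simp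
  show ?case
    by (simp, intro continuous_intros continuous_on_compose2[OF c]) auto
qed

lemma fd_appr: "continuous_on UNIV f \<Longrightarrow> appr \<sigma> 0 f \<Longrightarrow> appr \<sigma> k (fd f k)"
proof (induction k)
  case 0
  then show ?case by simp
next
  case (Suc k)
  then show ?case
    using appr_step[OF fd_cont[OF Suc.prems(1)] Suc.IH[OF Suc.prems]] by simp
qed

lemma powers_approx:
  assumes cont: "continuous_on UNIV \<sigma>"
    and nz: "\<exists>r c \<theta>. fd (\<lambda>x. \<sigma> (r*x+c)) k \<theta> \<noteq> 0"
  shows "approx_on \<sigma> a b (\<lambda>t. t^k)"
proof -
  obtain r c \<theta> where v: "fd (\<lambda>x. \<sigma> (r*x+c)) k \<theta> \<noteq> 0" using nz by blast
  have cf: "continuous_on UNIV (\<lambda>x. \<sigma> (r*x+c))"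
    by (intro continuous_on_compose2[OF cont] continuous_intros) auto
  have "appr \<sigma> k (fd (\<lambda>x. \<sigma> (r*x+c)) k)"
    by (rule fd_appr[OF cf appr_base])
  then have "approx_on \<sigma> a b (\<lambda>t. t^k * fd (\<lambda>x. \<sigma> (r*x+c)) k (0*t+\<theta>))"
    unfolding appr_def by blast
  then have "approx_on \<sigma> a b (\<lambda>t. (1 / fd (\<lambda>x. \<sigma> (r*x+c)) k \<theta>) * (t^k * fd (\<lambda>x. \<sigma> (r*x+c)) k (0*t+\<theta>)))"
    by (rule approx_on_cmult)
  then show ?thesis using v by simp
qed

lemma cont_approx:
  assumes cont: "continuous_on UNIV \<sigma>"
    and nz: "\<And>k. \<exists>r c \<theta>. fd (\<lambda>x. \<sigma> (r*x+c)) k \<theta> \<noteq> 0"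
    and g: "continuous_on {a..b} g"
  shows "approx_on \<sigma> a b g"
proof (rule approx_on_limit)
  fix \<epsilon> :: real assume e: "\<epsilon> > 0"
  obtain p where p: "real_polynomial_function p" "\<And>x. x \<in> {a..b} \<Longrightarrow> \<bar>g x - p x\<bar> < \<epsilon>"
    using Stone_Weierstrass_real_polynomial_function[OF compact_Icc g e] by blast
  obtain c n where pe: "p = (\<lambda>x. \<Sum>i\<le>n. c i * x^i)"
    using p(1) real_polynomial_function_iff_sum by blast
  have "approx_on \<sigma> a b p"
    unfolding pe by (intro approx_on_sum approx_on_cmult powers_approx[OF cont nz]) auto
  then show "\<exists>G. approx_on \<sigma> a b G \<and> (\<forall>t\<in>{a..b}. \<bar>G t - g t\<bar> < \<epsilon>)"
    using p(2) by (auto simp: abs_minus_commute)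
qed




lemma unit_cube_cbox: "unit_cube = cbox (0::real^'n) 1"
  unfolding unit_cube_def by (auto simp: mem_box_cart)

lemma compact_unit_cube: "compact (unit_cube :: (real^'n) set)"
  unfolding unit_cube_cbox by (rule compact_cbox)

lemma unit_cube_borel: "(unit_cube :: (real^'n) set) \<in> sets borel"
  unfolding unit_cube_cbox by simp

definition dm :: "nat \<Rightarrow> (nat \<Rightarrow> real) \<Rightarrow> (nat \<Rightarrow> real^'n) \<Rightarrow> (real^'n) measure" where
  "dm k p X = distr (point_measure {..k} (\<lambda>j. ennreal (p j))) (restrict_space borel unit_cube) X"

lemma dm_meas: "X ` {..k} \<subseteq> unit_cube \<Longrightarrow> X \<in> point_measure {..k} (\<lambda>j. ennreal (p j)) \<rightarrow>\<^sub>M restrict_space borel unit_cube"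
  by (auto simp: space_restrict_space)

lemma dm_sets: "sets (dm k p X) = sets (restrict_space borel unit_cube)"
  unfolding dm_def by simp

lemma dm_finite:
  assumes "X ` {..k} \<subseteq> unit_cube"
  shows "finite_measure (dm k p X)"
  unfolding dm_def
proof (rule finite_measure.finite_measure_distr[OF _ dm_meas[OF assms]])
  show "finite_measure (point_measure {..k} (\<lambda>j. ennreal (p j)))"
    using ennreal_sum_eq_top[of "{..k}" "\<lambda>j. ennreal (p j)"]
    by (intro finite_measureI) (simp add: emeasure_point_measure_finite space_point_measure)
qed

lemma dm_integral:
  assumes "X ` {..k} \<subseteq> unit_cube" "\<And>j. 0 \<le> p j" and g: "continuous_on UNIV g"
  shows "(\<integral>x. g x \<partial>dm k p X) = (\<Sum>j\<le>k. p j * g (X j))"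
proof -
  have gm: "g \<in> borel_measurable (restrict_space borel unit_cube)"
    by (intro measurable_restrict_space1 borel_measurable_continuous_onI g)
  have "(\<integral>x. g x \<partial>dm k p X) = (\<integral>j. g (X j) \<partial>point_measure {..k} (\<lambda>j. ennreal (p j)))"
    unfolding dm_def by (rule integral_distr[OF dm_meas[OF assms(1)] gm])
  also have "\<dots> = (\<Sum>j\<le>k. p j * g (X j))"
    using assms(2) by (subst lebesgue_integral_point_measure_finite) auto
  finally show ?thesis .
qed

lemma dm_measure_point:
  assumes "X ` {..k} \<subseteq> unit_cube" "\<And>j. 0 \<le> p j" "inj_on X {..k}" "i \<le> k"
  shows "measure (dm k p X) {X i} = p i"
proof -
  have Xi: "X i \<in> unit_cube" using assms by auto
  have s: "{X i} \<in> sets (restrict_space borel unit_cube)"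
    using Xi by (subst sets_restrict_space_iff) (auto simp: unit_cube_borel)
  have pre: "X -` {X i} \<inter> space (point_measure {..k} (\<lambda>j. ennreal (p j))) = {i}"
    using assms(3,4) by (auto simp: inj_on_def space_point_measure)
  show ?thesis
    unfolding dm_def measure_distr[OF dm_meas[OF assms(1)] s] pre
    using assms(2,4) by (subst measure_point_measure_finite_if) auto
qed

lemma disc_nz:
  fixes \<sigma> :: "real \<Rightarrow> real"
  assumes cont: "continuous_on UNIV \<sigma>" and disc: "discriminatory \<sigma> TYPE('n::finite)"
  shows "\<exists>r c \<theta>. fd (\<lambda>x. \<sigma> (r*x+c)) k \<theta> \<noteq> 0"
proof (rule ccontr)
  assume "\<not> ?thesis"
  then have z: "\<And>r c. (\<Sum>j\<le>k. cf k j * \<sigma> (r * real j + c)) = 0"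
    using fd_sum[of "\<lambda>x. \<sigma> (r*x+c)" k 0 for r c] by auto
  define X :: "nat \<Rightarrow> real^'n" where "X = (\<lambda>j. \<chi> i. real j / real (Suc k))"
  define p1 where "p1 = (\<lambda>j. max (cf k j) 0)"
  define p2 where "p2 = (\<lambda>j. max (- cf k j) 0)"
  have Xc: "X ` {..k} \<subseteq> unit_cube"
    unfolding X_def unit_cube_def by auto
  have Xinj: "inj_on X {..k}"
  proof (rule inj_onI)
    fix i j assume "X i = X j"
    then have "X i $ undefined = X j $ undefined" by simp
    then show "i = j" unfolding X_def by (simp add: divide_cancel_right)
  qed
  have p0: "\<And>j. 0 \<le> p1 j" "\<And>j. 0 \<le> p2 j" unfolding p1_def p2_def by auto
  define M1 where "M1 = dm k p1 X"
  define M2 where "M2 = dm k p2 X"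
  have eq: "(\<integral>x. \<sigma> (w \<bullet> x + \<theta>) \<partial>M1) = (\<integral>x. \<sigma> (w \<bullet> x + \<theta>) \<partial>M2)" for w \<theta>
  proof -
    have gc: "continuous_on UNIV (\<lambda>x::real^'n. \<sigma> (w \<bullet> x + \<theta>))"
      by (intro continuous_on_compose2[OF cont] continuous_intros) auto
    define s where "s = (\<Sum>i\<in>UNIV. w $ i) / real (Suc k)"
    have wx: "w \<bullet> X j = s * real j" for j
      unfolding X_def s_def inner_vec_def by (simp add: sum_divide_distrib sum_distrib_left algebra_simps)
    have "(\<integral>x. \<sigma> (w \<bullet> x + \<theta>) \<partial>M1) - (\<integral>x. \<sigma> (w \<bullet> x + \<theta>) \<partial>M2)
        = (\<Sum>j\<le>k. (p1 j - p2 j) * \<sigma> (w \<bullet> X j + \<theta>))"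
      unfolding M1_def M2_def dm_integral[OF Xc p0(1) gc] dm_integral[OF Xc p0(2) gc]
      by (simp add: sum_subtractf left_diff_distrib)
    also have "\<dots> = (\<Sum>j\<le>k. cf k j * \<sigma> (s * real j + \<theta>))"
      unfolding wx p1_def p2_def by (intro sum.cong) auto
    also have "\<dots> = 0" by (rule z)
    finally show ?thesis by simp
  qed
  have "\<forall>S \<in> sets M1. measure M1 S = measure M2 S"
    using disc unfolding discriminatory_def
    using dm_finite[OF Xc] dm_sets eq unfolding M1_def M2_def by blast
  moreover have "{X k} \<in> sets M1"
    unfolding M1_def dm_sets using Xc by (subst sets_restrict_space_iff) (auto simp: unit_cube_borel)
  ultimately have "measure M1 {X k} = measure M2 {X k}" by blast
  moreover have "measure M1 {X k} = 1"
    unfolding M1_def using dm_measure_point[OF Xc p0(1) Xinj, of k] by (simp add: p1_def cf_top)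
  moreover have "measure M2 {X k} = 0"
    unfolding M2_def using dm_measure_point[OF Xc p0(2) Xinj, of k] by (simp add: p2_def cf_top)
  ultimately show False by simp
qed




definition netn :: "(real \<Rightarrow> real) \<Rightarrow> (real \<times> (real^'n) \<times> real) list \<Rightarrow> real^'n \<Rightarrow> real" where
  "netn \<sigma> L x = sum_list (map (\<lambda>(\<beta>,w,\<theta>). \<beta> * \<sigma> (w \<bullet> x + \<theta>)) L)"

definition approxn :: "(real \<Rightarrow> real) \<Rightarrow> (real^'n \<Rightarrow> real) \<Rightarrow> bool" where
  "approxn \<sigma> F \<longleftrightarrow> (\<forall>\<epsilon>>0. \<exists>L. \<forall>x\<in>unit_cube. \<bar>netn \<sigma> L x - F x\<bar> < \<epsilon>)"

lemma netn_append[simp]: "netn \<sigma> (L1 @ L2) x = netn \<sigma> L1 x + netn \<sigma> L2 x"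
  by (simp add: netn_def)

lemma netn_Nil[simp]: "netn \<sigma> [] x = 0"
  by (simp add: netn_def)

lemma netn_scale: "netn \<sigma> (map (\<lambda>(\<beta>,w,\<theta>). (c*\<beta>,w,\<theta>)) L) x = c * netn \<sigma> L x"
  by (induction L) (auto simp: netn_def algebra_simps)

lemma approxn_add:
  fixes F G :: "real^'n::finite \<Rightarrow> real"
  assumes "approxn \<sigma> F" "approxn \<sigma> G"
  shows "approxn \<sigma> (\<lambda>t. F t + G t)"
  unfolding approxn_def
proof (intro allI impI)
  fix \<epsilon> :: real assume e: "\<epsilon> > 0"
  obtain L1 where L1: "\<forall>t\<in>unit_cube. \<bar>netn \<sigma> L1 t - F t\<bar> < \<epsilon>/2"
    using assms(1) e unfolding approxn_def by (meson half_gt_zero)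
  obtain L2 where L2: "\<forall>t\<in>unit_cube. \<bar>netn \<sigma> L2 t - G t\<bar> < \<epsilon>/2"
    using assms(2) e unfolding approxn_def by (meson half_gt_zero)
  show "\<exists>L. \<forall>t\<in>unit_cube. \<bar>netn \<sigma> L t - (F t + G t)\<bar> < \<epsilon>"
  proof (intro exI ballI)
    fix t :: "real^'n" assume t: "t \<in> unit_cube"
    show "\<bar>netn \<sigma> (L1@L2) t - (F t + G t)\<bar> < \<epsilon>"
      using L1[rule_format, OF t] L2[rule_format, OF t] 
        abs_triangle_ineq[of "netn \<sigma> L1 t - F t" "netn \<sigma> L2 t - G t"] by (simp add: algebra_simps)
  qed
qed

lemma approxn_cmult:
  fixes F :: "real^'n::finite \<Rightarrow> real"
  assumes "approxn \<sigma> F"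
  shows "approxn \<sigma> (\<lambda>t. c * F t)"
  unfolding approxn_def
proof (intro allI impI)
  fix \<epsilon> :: real assume e: "\<epsilon> > 0"
  obtain L1 where L1: "\<forall>t\<in>unit_cube. \<bar>netn \<sigma> L1 t - F t\<bar> < \<epsilon>/(\<bar>c\<bar>+1)"
    using assms(1) e unfolding approxn_def by (meson divide_pos_pos abs_ge_zero add_nonneg_pos zero_less_one)
  show "\<exists>L. \<forall>t\<in>unit_cube. \<bar>netn \<sigma> L t - c * F t\<bar> < \<epsilon>"
  proof (intro exI ballI)
    fix t :: "real^'n" assume t: "t \<in> unit_cube"
    have "\<bar>netn \<sigma> (map (\<lambda>(\<beta>,w,\<theta>). (c*\<beta>,w,\<theta>)) L1) t - c * F t\<bar> = \<bar>c\<bar> * \<bar>netn \<sigma> L1 t - F t\<bar>"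
      by (simp only: netn_scale flip: right_diff_distrib abs_mult)
    also have "\<dots> \<le> \<bar>c\<bar> * (\<epsilon>/(\<bar>c\<bar>+1))"
      using L1[rule_format, OF t] by (intro mult_left_mono) auto
    also have "\<dots> < \<epsilon>"
      using e by (intro frac_lt) auto
    finally show "\<bar>netn \<sigma> (map (\<lambda>(\<beta>,w,\<theta>). (c*\<beta>,w,\<theta>)) L1) t - c * F t\<bar> < \<epsilon>" .
  qed
qed

lemma approxn_zero: "approxn \<sigma> (\<lambda>t. 0)"
  unfolding approxn_def by (intro allI impI exI[of _ "[]"]) auto

definition expf :: "(real \<times> (real^'n)) list \<Rightarrow> real^'n \<Rightarrow> real" where
  "expf E x = sum_list (map (\<lambda>(c,v). c * exp (v \<bullet> x)) E)"

lemma expf_Nil[simp]: "expf [] x = 0" by (simp add: expf_def)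
lemma expf_Cons[simp]: "expf ((c,v)#E) x = c * exp (v \<bullet> x) + expf E x" by (simp add: expf_def)
lemma expf_append[simp]: "expf (E1@E2) x = expf E1 x + expf E2 x" by (simp add: expf_def)

lemma expf_mult1: "expf (map (\<lambda>(c2,v2). (c1*c2, v1+v2)) E2) x = c1 * exp (v1 \<bullet> x) * expf E2 x"
  by (induction E2) (auto simp: inner_add_left exp_add algebra_simps)

lemma expf_mult: "expf E1 x * expf E2 x = expf (concat (map (\<lambda>(c1,v1). map (\<lambda>(c2,v2). (c1*c2, v1+v2)) E2) E1)) x"
  by (induction E1) (auto simp: expf_mult1 algebra_simps expf_def[symmetric])

lemma expf_cont: "continuous_on S (expf E)"
  by (induction E) (auto intro!: continuous_intros simp: expf_def[symmetric])

lemma cube_bound: "\<exists>R. \<forall>x\<in>(unit_cube :: (real^'n) set). norm x \<le> R"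
  using compact_imp_bounded[OF compact_unit_cube] unfolding bounded_iff by blast

lemma approxn_exp:
  assumes app: "\<And>a b g. continuous_on {a..b} g \<Longrightarrow> approx_on \<sigma> a b g"
  shows "approxn \<sigma> (\<lambda>x::real^'n. exp (v \<bullet> x))"
  unfolding approxn_def
proof (intro allI impI)
  fix \<epsilon> :: real assume e: "\<epsilon> > 0"
  obtain R where R: "\<forall>x\<in>(unit_cube :: (real^'n) set). norm x \<le> R" using cube_bound by blast
  define B where "B = norm v * R"
  have "approx_on \<sigma> (-B) B exp" by (rule app) (intro continuous_intros)
  then obtain L where L: "\<forall>t\<in>{-B..B}. \<bar>net \<sigma> L t - exp t\<bar> < \<epsilon>"
    using e unfolding approx_on_def by blast
  define L' where "L' = map (\<lambda>(\<beta>,w,\<theta>). (\<beta>, w *\<^sub>R v, \<theta>)) L"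
  have nn: "netn \<sigma> L' x = net \<sigma> L (v \<bullet> x)" for x
    unfolding L'_def netn_def net_def by (induction L) auto
  show "\<exists>L. \<forall>x\<in>unit_cube. \<bar>netn \<sigma> L x - exp (v \<bullet> x)\<bar> < \<epsilon>"
  proof (intro exI ballI)
    fix x :: "real^'n" assume x: "x \<in> unit_cube"
    have "\<bar>v \<bullet> x\<bar> \<le> norm v * norm x" by (rule Cauchy_Schwarz_ineq2)
    also have "\<dots> \<le> B" unfolding B_def using R x by (intro mult_left_mono) auto
    finally have "v \<bullet> x \<in> {-B..B}" by (auto simp: abs_le_iff)
    then show "\<bar>netn \<sigma> L' x - exp (v \<bullet> x)\<bar> < \<epsilon>" using L nn by auto
  qed
qed

lemma approxn_expf:
  assumes app: "\<And>a b g. continuous_on {a..b} g \<Longrightarrow> approx_on \<sigma> a b g"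
  shows "approxn \<sigma> (expf (E :: (real \<times> (real^'n)) list))"
proof (induction E)
  case Nil
  then show ?case using approxn_zero by (simp add: expf_def)
next
  case (Cons a E)
  obtain c v where a: "a = (c,v)" by fastforce
  show ?case
    unfolding a using approxn_add[OF approxn_cmult[OF approxn_exp[OF app, of v], of c] Cons.IH]
    by (simp add: expf_def[symmetric])
qed

lemma approxn_all:
  assumes app: "\<And>a b g. continuous_on {a..b} g \<Longrightarrow> approx_on \<sigma> a b g"
    and f: "continuous_on unit_cube (f :: real^'n \<Rightarrow> real)" and e: "\<epsilon> > 0"
  shows "\<exists>L. \<forall>x\<in>unit_cube. \<bar>netn \<sigma> L x - f x\<bar> < \<epsilon>"
proof -
  have "\<exists>g. (\<exists>E. g = expf E) \<and> (\<forall>x\<in>unit_cube. \<bar>f x - g x\<bar> < \<epsilon>/2)"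
  proof (rule Stone_Weierstrass_HOL[where P="\<lambda>g. \<exists>E. g = expf E"])
    show "compact (unit_cube :: (real^'n) set)" by (rule compact_unit_cube)
    show "\<exists>E. (\<lambda>x. c) = expf E" for c
      by (intro exI[of _ "[(c,0)]"]) auto
    show "continuous_on unit_cube g" if "\<exists>E. g = expf E" for g
      using that expf_cont by blast
    show "\<exists>E. (\<lambda>x. g x + h x) = expf E" if gh: "(\<exists>E. g = expf E) \<and> (\<exists>E. h = expf E)" for g h
    proof -
      obtain E1 E2 where "g = expf E1" "h = expf E2" using gh by blast
      then show ?thesis by (intro exI[of _ "E1@E2"]) auto
    qed
    show "\<exists>E. (\<lambda>x. g x * h x) = expf E" if gh: "(\<exists>E. g = expf E) \<and> (\<exists>E. h = expf E)" for g h
    proof -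
      obtain E1 E2 where "g = expf E1" "h = expf E2" using gh by blast
      then show ?thesis by (intro exI[of _ "concat (map (\<lambda>(c1,v1). map (\<lambda>(c2,v2). (c1*c2, v1+v2)) E2) E1)"])
         (simp add: expf_mult)
    qed
    show "\<exists>g. (\<exists>E. g = expf E) \<and> g x \<noteq> g y" if xy: "x \<in> unit_cube \<and> y \<in> unit_cube \<and> x \<noteq> y" for x y
    proof -
      obtain i where i: "x $ i \<noteq> y $ i" using xy by (auto simp: vec_eq_iff)
      show ?thesis
        using i by (intro exI[of _ "expf [(1, axis i 1)]"]) (auto simp: inner_axis')
    qed
  qed (use f e in auto)
  then obtain E where E: "\<forall>x\<in>unit_cube. \<bar>f x - expf E x\<bar> < \<epsilon>/2" by blast
  obtain L where L: "\<forall>x\<in>unit_cube. \<bar>netn \<sigma> L x - expf E x\<bar> < \<epsilon>/2"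
    using approxn_expf[OF app, of E] e unfolding approxn_def by (meson half_gt_zero)
  show ?thesis
    using E L abs_tri_lt[of _ _ "\<epsilon>/2" _ "\<epsilon>/2"] by (intro exI[of _ L]) (fastforce simp: abs_minus_commute)
qed




lemma real_right_eig:
  fixes B :: "real^'n^'n"
  assumes d: "distinct_abs_eigenvalues B"
  shows "\<exists>\<mu> y. y \<noteq> 0 \<and> B *v y = \<mu> *s y"
proof -
  have "eigenvalues B \<noteq> {}"
    using d unfolding distinct_abs_eigenvalues_def by auto
  then obtain e where "e \<in> eigenvalues B" by blast
  then obtain v :: "complex^'n" where v: "v \<noteq> 0" "cmat B *v v = e *s v"
    unfolding eigenvalues_def by blast
  have comp: "(\<Sum>j\<in>UNIV. complex_of_real (B$i$j) * v$j) = e * v$i" for i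
    using v(2) unfolding vec_eq_iff by (auto simp: matrix_vector_mult_def cmat_def)
  define vc :: "complex^'n" where "vc = (\<chi> i. cnj (v$i))"
  have "vc \<noteq> 0" using v(1) unfolding vc_def by (auto simp: vec_eq_iff)
  moreover have "cmat B *v vc = cnj e *s vc"
  proof -
    have "(\<Sum>j\<in>UNIV. complex_of_real (B$i$j) * cnj (v$j)) = cnj e * cnj (v$i)" for i
    proof -
      have "cnj (\<Sum>j\<in>UNIV. complex_of_real (B$i$j) * v$j) = cnj (e * v$i)" using comp by simp
      then show ?thesis by (simp add: cnj_sum)
    qed
    then show ?thesis by (simp add: vec_eq_iff matrix_vector_mult_def cmat_def vc_def)
  qed
  ultimately have "cnj e \<in> eigenvalues B" unfolding eigenvalues_def by blast
  then have "cnj e = e"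
    using d \<open>e \<in> eigenvalues B\<close> unfolding distinct_abs_eigenvalues_def inj_on_def by auto
  then have Im0: "Im e = 0" by (metis Reals_cnj_iff complex_is_Real_iff)
  define \<mu> where "\<mu> = Re e"
  define yr :: "real^'n" where "yr = (\<chi> i. Re (v$i))"
  define yi :: "real^'n" where "yi = (\<chi> i. Im (v$i))"
  have "B *v yr = \<mu> *s yr"
  proof -
    have "(\<Sum>j\<in>UNIV. B$i$j * Re (v$j)) = \<mu> * Re (v$i)" for i
      using arg_cong[OF comp[of i], of Re] Im0 unfolding \<mu>_def by (simp add: Re_sum)
    then show ?thesis by (simp add: vec_eq_iff matrix_vector_mult_def yr_def)
  qed
  moreover have "B *v yi = \<mu> *s yi"
  proof -
    have "(\<Sum>j\<in>UNIV. B$i$j * Im (v$j)) = \<mu> * Im (v$i)" for i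
      using arg_cong[OF comp[of i], of Im] Im0 unfolding \<mu>_def by (simp add: Im_sum)
    then show ?thesis by (simp add: vec_eq_iff matrix_vector_mult_def yi_def)
  qed
  moreover have "yr \<noteq> 0 \<or> yi \<noteq> 0"
    using v(1) unfolding yr_def yi_def by (auto simp: vec_eq_iff complex_eq_iff)
  ultimately show ?thesis by blast
qed

lemma real_left_eig:
  fixes B :: "real^'n^'n"
  assumes d: "distinct_abs_eigenvalues B"
  shows "\<exists>\<mu> h. h \<noteq> 0 \<and> h v* B = \<mu> *s h"
proof -
  obtain \<mu> y where y: "y \<noteq> 0" "B *v y = \<mu> *s y" using real_right_eig[OF d] by blast
  define C where "C = B - \<mu> *\<^sub>R mat 1"
  have "(\<mu> *\<^sub>R mat 1) *v y = \<mu> *s y"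
    by (metis matrix_vector_mul_lid scaleR_matrix_vector_assoc scalar_mult_eq_scaleR)
  then have "C *v y = 0" unfolding C_def using y(2)
    by (simp add: matrix_vector_mult_diff_rdistrib)
  then have "\<not> invertible C"
    using y(1) by (metis invertible_left_inverse matrix_left_invertible_ker)
  then have "\<not> invertible (transpose C)"
    by (metis transpose_invertible transpose_transpose)
  then obtain h where h: "h \<noteq> 0" "transpose C *v h = 0"
    by (metis invertible_left_inverse matrix_left_invertible_ker)
  have "h v* C = 0" using h(2) by simp
  moreover have "h v* (\<mu> *\<^sub>R mat 1) = \<mu> *s h"
    by (metis vector_matrix_mul_rid vector_scaleR_matrix_ac scalar_mult_eq_scaleR)
  moreover have "h v* C = h v* B - h v* (\<mu> *\<^sub>R mat 1)" unfolding C_def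
    by (simp add: vector_matrix_mult_def vec_eq_iff sum_subtractf right_diff_distrib)
  ultimately have "h v* B = \<mu> *s h" by simp
  then show ?thesis using h(1) by blast
qed

lemma column_construct:
  fixes A B :: "real^'n^'n"
  assumes d: "distinct_abs_eigenvalues B"
  shows "\<exists>c0. \<forall>u. \<exists>W. (\<exists>g h. W - A ** W ** B = outer g h) \<and> column c0 W = u"
proof -
  obtain \<mu> h where h: "h \<noteq> 0" "h v* B = \<mu> *s h" using real_left_eig[OF d] by blast
  obtain c0 where c0: "h $ c0 \<noteq> 0" using h(1) by (auto simp: vec_eq_iff)
  have "\<exists>W. (\<exists>g h. W - A ** W ** B = outer g h) \<and> column c0 W = u" for u
  proof -
    define z where "z = (1 / h$c0) *\<^sub>R u"
    define W where "W = outer z h"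
    have hB: "(\<Sum>k\<in>UNIV. h$k * B$k$c) = \<mu> * h$c" for c
      using h(2) unfolding vec_eq_iff vector_matrix_mult_def by (auto simp: mult.commute)
    have "A ** W ** B = outer (A *v z) (\<mu> *s h)"
    proof -
      have "A ** W = outer (A *v z) h"
        unfolding W_def outer_def
        by (simp add: vec_eq_iff matrix_matrix_mult_def matrix_vector_mult_def sum_distrib_right mult.assoc)
      moreover have "outer (A *v z) h ** B = outer (A *v z) (\<mu> *s h)"
        unfolding outer_def
        by (simp add: vec_eq_iff matrix_matrix_mult_def mult.assoc flip: sum_distrib_left hB)
      ultimately show ?thesis by simp
    qed
    then have "W - A ** W ** B = outer (z - \<mu> *s (A *v z)) h"
      unfolding W_def outer_def by (simp add: vec_eq_iff algebra_simps)
    moreover have "column c0 W = u"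
      unfolding W_def outer_def column_def z_def using c0 by (simp add: vec_eq_iff)
    ultimately show ?thesis by blast
  qed
  then show ?thesis by blast
qed




theorem theorem2:
  fixes \<sigma> :: "real \<Rightarrow> real"
    and A B :: "real^'n^'n"
    and q :: nat and a :: real
  assumes "continuous_on UNIV \<sigma>"
    and "discriminatory \<sigma> TYPE('n)"
    and "invertible A" and "invertible B"
    and "diagonalizable A" and "diagonalizable B"
    and "0 < q" and "q \<le> CARD('n)" and "a \<noteq> 0"
    and "mat_pow A q = a *\<^sub>R mat 1"
    and "invertible (mat 1 - a *\<^sub>R mat_pow B q)"
    and "distinct_abs_eigenvalues B"
  shows "\<forall>f :: real^'n \<Rightarrow> real. continuous_on unit_cube f \<longrightarrow>
     (\<forall>\<epsilon>>0. \<exists>(k::nat) (W :: nat \<Rightarrow> real^'n^'n) (\<alpha> :: nat \<Rightarrow> 'n \<Rightarrow> real) (\<theta> :: nat \<Rightarrow> 'n \<Rightarrow> real).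
        0 < k \<and>
        (\<forall>i<k. \<exists>g h. W i - A ** W i ** B = outer g h) \<and>
        (\<forall>x\<in>unit_cube.
           \<bar>(\<Sum>i<k. \<Sum>c\<in>UNIV. \<alpha> i c * \<sigma> (column c (W i) \<bullet> x + \<theta> i c)) - f x\<bar> < \<epsilon>))"
proof (intro allI impI)
  fix f :: "real^'n \<Rightarrow> real" and \<epsilon> :: real
  assume f: "continuous_on unit_cube f" and e: "\<epsilon> > 0"
  have nz: "\<And>k. \<exists>r c \<theta>. fd (\<lambda>x. \<sigma> (r*x+c)) k \<theta> \<noteq> 0"
    by (rule disc_nz[OF assms(1) assms(2)])
  have app: "\<And>a b g. continuous_on {a..b} g \<Longrightarrow> approx_on \<sigma> a b g"
    by (rule cont_approx[OF assms(1) nz])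
  obtain L where L: "\<forall>x\<in>unit_cube. \<bar>netn \<sigma> L x - f x\<bar> < \<epsilon>"
    using approxn_all[OF app f e] by blast
  obtain c0 where c0: "\<And>u. \<exists>W. (\<exists>g h. W - A ** W ** B = outer g h) \<and> column c0 W = u"
    using column_construct[OF assms(12), of A] by blast
  define Wf where "Wf = (\<lambda>u. SOME W. (\<exists>g h. W - A ** W ** B = outer g h) \<and> column c0 W = u)"
  have Wf: "(\<exists>g h. Wf u - A ** Wf u ** B = outer g h) \<and> column c0 (Wf u) = u" for u
    unfolding Wf_def by (rule someI_ex[OF c0])
  define n where "n = length L"
  define W where "W = (\<lambda>i. Wf (if i < n then fst (snd (L!i)) else 0))"
  define \<alpha> where "\<alpha> = (\<lambda>i c. if c = c0 \<and> i < n then fst (L!i) else 0)"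
  define \<theta> where "\<theta> = (\<lambda>(i::nat) (c::'n). snd (snd (L!i)))"
  have sumeq: "(\<Sum>i<Suc n. \<Sum>c\<in>UNIV. \<alpha> i c * \<sigma> (column c (W i) \<bullet> x + \<theta> i c)) = netn \<sigma> L x" for x
  proof -
    have inner: "(\<Sum>c\<in>UNIV. \<alpha> i c * \<sigma> (column c (W i) \<bullet> x + \<theta> i c)) =
        (if i < n then fst (L!i) * \<sigma> (fst (snd (L!i)) \<bullet> x + snd (snd (L!i))) else 0)" for i
    proof -
      have "(\<Sum>c\<in>UNIV. \<alpha> i c * \<sigma> (column c (W i) \<bullet> x + \<theta> i c)) =
          (\<Sum>c\<in>UNIV. if c = c0 then (if i < n then fst (L!i) else 0) * \<sigma> (column c0 (W i) \<bullet> x + \<theta> i c0) else 0)"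
        unfolding \<alpha>_def by (intro sum.cong) auto
      also have "\<dots> = (if i < n then fst (L!i) else 0) * \<sigma> (column c0 (W i) \<bullet> x + \<theta> i c0)"
        by simp
      finally show ?thesis unfolding W_def \<theta>_def using Wf by auto
    qed
    have "(\<Sum>i<Suc n. \<Sum>c\<in>UNIV. \<alpha> i c * \<sigma> (column c (W i) \<bullet> x + \<theta> i c)) =
        (\<Sum>i<n. fst (L!i) * \<sigma> (fst (snd (L!i)) \<bullet> x + snd (snd (L!i))))"
      unfolding inner by simp
    also have "\<dots> = netn \<sigma> L x"
      unfolding netn_def n_def sum_list_sum_nth by (intro sum.cong) (auto simp: case_prod_beta atLeast0LessThan)
    finally show ?thesis .
  qed
  show "\<exists>(k::nat) (W :: nat \<Rightarrow> real^'n^'n) (\<alpha> :: nat \<Rightarrow> 'n \<Rightarrow> real) (\<theta> :: nat \<Rightarrow> 'n \<Rightarrow> real).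
        0 < k \<and>
        (\<forall>i<k. \<exists>g h. W i - A ** W i ** B = outer g h) \<and>
        (\<forall>x\<in>unit_cube.
           \<bar>(\<Sum>i<k. \<Sum>c\<in>UNIV. \<alpha> i c * \<sigma> (column c (W i) \<bullet> x + \<theta> i c)) - f x\<bar> < \<epsilon>)"
    using L Wf sumeq unfolding W_def by (intro exI[of _ "Suc n"] exI[of _ W] exI[of _ \<alpha>] exI[of _ \<theta>]) (auto simp: W_def)
qed


end
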